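(* For every $m\ge1$, $0\le s\le m$ and every $j\in\{1,\dots,m\}$, the function $e^{(m-1)\lambda_j}\,\tilde G_s(m,\{\lambda_l\}|\{\xi_k\})$, viewed as a function of $\lambda_j$ with all other variables fixed (generic), is a polynomial in $e^{2\lambda_j}$ of degree at most $m-1$.
   Context: Fix $\zeta\in(0,\pi)$. For integers $m\ge1$, $0\le s\le m$, set $\epsilon_j=-\tfrac12$ for $j\le s$ and $\epsilon_j=+\tfrac12$ for $j>s$ ($\epsilon_j$ attached to $\lambda_j$). Define $$G_s(m,\{\lambda_j\}|\{\xi_k\})=\frac{1}{s!(m-s)!}\sum_{\sigma\in S_m}(-1)^{[\sigma]}\prod_{1\le k<j\le m}\frac{\sinh(\lambda_{\sigma(j)}-\xi_k+i\epsilon_{\sigma(j)}\zeta)\,\sinh(\lambda_{\sigma(k)}-\xi_j-i\epsilon_{\sigma(k)}\zeta)}{\sinh(\lambda_{\sigma(j)}-\lambda_{\sigma(k)}+i(\epsilon_{\sigma(j)}+\epsilon_{\sigma(k)})\zeta)}$$ ($(-1)^{[\sigma]}$ the sign of $\sigma$), and define $\tilde G_s$ by $$G_s(m,\{\lambda_j\}|\{\xi_k\})=\frac{1}{s!(m-s)!}\prod_{1\le k<j\le m}\frac{\sinh(\lambda_j-\lambda_k)}{\sinh(\lambda_j-\lambda_k+i(\epsilon_j+\epsilon_k)\zeta)\,\sinh(\lambda_j-\lambda_k-i(\epsilon_j+\epsilon_k)\zeta)}\;\tilde G_s(m,\{\lambda_j\}|\{\xi_k\}),$$ understood as an identity of meromorphic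 functions (removable singularities extended by continuity). *)

theory Defs
  imports "HOL-Analysis.Analysis" "HOL-Combinatorics.Permutations"
begin

definition eps :: "nat \<Rightarrow> nat \<Rightarrow> real" where
  "eps s j = (if j \<le> s then -1/2 else 1/2)"

definition G :: "real \<Rightarrow> nat \<Rightarrow> nat \<Rightarrow> (nat \<Rightarrow> complex) \<Rightarrow> (nat \<Rightarrow> complex) \<Rightarrow> complex" where
  "G \<zeta> s m lam xi =
     (1 / (fact s * fact (m - s))) *
     (\<Sum>\<sigma> | \<sigma> permutes {1..m}. of_int (sign \<sigma>) *
        (\<Prod>j\<in>{1..m}. \<Prod>k\<in>{1..<j}.
           sinh (lam (\<sigma> j) - xi k + \<i> * of_real (eps s (\<sigma> j) * \<zeta>)) *
           sinh (lam (\<sigma> k) - xi j - \<i> * of_real (eps s (\<sigma> k) * \<zeta>)) /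
           sinh (lam (\<sigma> j) - lam (\<sigma> k) + \<i> * of_real ((eps s (\<sigma> j) + eps s (\<sigma> k)) * \<zeta>))))"

text \<open>Points where all denominators involved (in G and in the prefactor) are nonzero;
  there the pointwise formula agrees with the meromorphic function.\<close>
definition regular_point :: "real \<Rightarrow> nat \<Rightarrow> nat \<Rightarrow> (nat \<Rightarrow> complex) \<Rightarrow> bool" where
  "regular_point \<zeta> s m lam \<longleftrightarrow>
     (\<forall>j k. 1 \<le> k \<and> k < j \<and> j \<le> m \<longrightarrow>
        sinh (lam j - lam k) \<noteq> 0 \<and>
        sinh (lam j - lam k + \<i> * of_real ((eps s j + eps s k) * \<zeta>)) \<noteq> 0 \<and>
        sinh (lam j - lam k - \<i> * of_real ((eps s j + eps s k) * \<zeta>)) \<noteq> 0)"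

text \<open>G-tilde, obtained by solving the defining identity for it.\<close>
definition Gt :: "real \<Rightarrow> nat \<Rightarrow> nat \<Rightarrow> (nat \<Rightarrow> complex) \<Rightarrow> (nat \<Rightarrow> complex) \<Rightarrow> complex" where
  "Gt \<zeta> s m lam xi =
     G \<zeta> s m lam xi * (fact s * fact (m - s)) *
     (\<Prod>j\<in>{1..m}. \<Prod>k\<in>{1..<j}.
        sinh (lam j - lam k + \<i> * of_real ((eps s j + eps s k) * \<zeta>)) *
        sinh (lam j - lam k - \<i> * of_real ((eps s j + eps s k) * \<zeta>)) /
        sinh (lam j - lam k))"

end

theory Submission
  imports Defs "HOL-Computational_Algebra.Polynomial"
begin

definition lp :: "nat \<Rightarrow> (complex \<Rightarrow> complex) \<Rightarrow> bool" where
  "lp n f \<longleftrightarrow> (\<exists>p. degree p \<le> n \<and> (\<forall>z. f z * exp (of_nat n * z) = poly p (exp (2*z))))"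

lemma lp_const: "lp 0 (\<lambda>z. c)"
  unfolding lp_def by (rule exI[of _ "[:c:]"]) simp

lemma lp_sinh: "lp 1 (\<lambda>z. sinh (z + c))"
  unfolding lp_def
proof (rule exI[of _ "[:- exp (-c)/2, exp c / 2:]"], intro conjI allI)
  fix z :: complex
  have e1: "exp (z+c) * exp z = exp (2*z) * exp c"
    unfolding mult_exp_exp by (rule arg_cong[where f=exp]) simp
  have e2: "exp (-(z+c)) * exp z = exp (-c)"
    unfolding mult_exp_exp by (rule arg_cong[where f=exp]) simp
  have "sinh (z + c) * exp (of_nat 1 * z) = (exp (z+c) * exp z - exp (-(z+c)) * exp z) / 2"
    unfolding sinh_field_def by (simp add: left_diff_distrib)
  also have "\<dots> = (exp (2*z) * exp c - exp (-c)) / 2" unfolding e1 e2 ..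
  also have "\<dots> = poly [:- exp (-c)/2, exp c / 2:] (exp (2*z))" by (simp add: field_simps)
  finally show "sinh (z + c) * exp (of_nat 1 * z) = poly [:- exp (-c)/2, exp c / 2:] (exp (2*z))" .
qed simp

lemma lp_mult: "lp n f \<Longrightarrow> lp k g \<Longrightarrow> lp (n+k) (\<lambda>z. f z * g z)"
  unfolding lp_def
proof (elim exE conjE)
  fix p q assume p: "degree p \<le> n" "\<forall>z. f z * exp (of_nat n * z) = poly p (exp (2*z))"
    and q: "degree q \<le> k" "\<forall>z. g z * exp (of_nat k * z) = poly q (exp (2*z))"
  show "\<exists>r. degree r \<le> n+k \<and> (\<forall>z. f z * g z * exp (of_nat (n+k) * z) = poly r (exp (2*z)))"
  proof (rule exI[of _ "p*q"], intro conjI allI)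
    show "degree (p*q) \<le> n+k" using p(1) q(1) degree_mult_le[of p q] by linarith
    fix z
    have "f z * g z * exp (of_nat (n+k) * z) = (f z * exp (of_nat n * z)) * (g z * exp (of_nat k * z))"
      by (simp add: distrib_right exp_add)
    then show "f z * g z * exp (of_nat (n+k) * z) = poly (p*q) (exp (2*z))" using p(2) q(2) by simp
  qed
qed

lemma lp_add: "lp n f \<Longrightarrow> lp n g \<Longrightarrow> lp n (\<lambda>z. f z + g z)"
  unfolding lp_def
proof (elim exE conjE)
  fix p q assume p: "degree p \<le> n" "\<forall>z. f z * exp (of_nat n * z) = poly p (exp (2*z))"
    and q: "degree q \<le> n" "\<forall>z. g z * exp (of_nat n * z) = poly q (exp (2*z))"
  show "\<exists>r. degree r \<le> n \<and> (\<forall>z. (f z + g z) * exp (of_nat n * z) = poly r (exp (2*z)))"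
  proof (rule exI[of _ "p+q"], intro conjI allI)
    show "degree (p+q) \<le> n" using p(1) q(1) degree_add_le by blast
    fix z show "(f z + g z) * exp (of_nat n * z) = poly (p+q) (exp (2*z))"
      using p(2) q(2) by (simp add: distrib_right)
  qed
qed

lemma lp_scale: "lp n f \<Longrightarrow> lp n (\<lambda>z. c * f z)"
  using lp_mult[OF lp_const[of c]] by simp

lemma lp_zero: "lp n (\<lambda>z. 0)"
  unfolding lp_def by (rule exI[of _ 0]) simp

lemma lp_sum: "finite A \<Longrightarrow> (\<And>i. i \<in> A \<Longrightarrow> lp n (f i)) \<Longrightarrow> lp n (\<lambda>z. \<Sum>i\<in>A. f i z)"
proof (induction A rule: finite_induct)
  case empty then show ?case by (simp add: lp_zero)
next
  case (insert x F)
  then show ?case using lp_add[of n "f x" "\<lambda>z. \<Sum>i\<in>F. f i z"] by simp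
qed

lemma lp_prod: "finite A \<Longrightarrow> (\<And>i. i \<in> A \<Longrightarrow> lp (n i) (f i)) \<Longrightarrow> lp (\<Sum>i\<in>A. n i) (\<lambda>z. \<Prod>i\<in>A. f i z)"
proof (induction A rule: finite_induct)
  case empty then show ?case using lp_const[of 1] by simp
next
  case (insert x F)
  then show ?case using lp_mult[of "n x" "f x" "\<Sum>i\<in>F. n i" "\<lambda>z. \<Prod>i\<in>F. f i z"] by simp
qed

lemma lp_eq: "lp n f \<Longrightarrow> n = k \<Longrightarrow> (\<And>z. f z = g z) \<Longrightarrow> lp k g"
proof -
  assume "lp n f" "n = k" "\<And>z. f z = g z"
  moreover have "f = g" using \<open>\<And>z. f z = g z\<close> by (rule ext)
  ultimately show "lp k g" by simp
qed

lemma lp_var: "lp (if b = a then 1 else 0) (\<lambda>z. sinh ((lam(a:=z)) b + c))"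
proof (cases "b = a")
  case True then show ?thesis using lp_sinh[of c] by simp
next
  case False then show ?thesis using lp_const[of "sinh (lam b + c)"] by simp
qed

lemma lp_var2:
  assumes "b \<noteq> d"
  shows "lp ((if b = a then 1 else 0) + (if d = a then 1 else 0)) (\<lambda>z. sinh ((lam(a:=z)) b - (lam(a:=z)) d + c))"
proof -
  consider "b = a" | "d = a" | "b \<noteq> a \<and> d \<noteq> a" by blast
  then show ?thesis
  proof cases
    case 1
    show ?thesis using lp_sinh[of "c - lam d"]
    proof (rule lp_eq)
      show "(1::nat) = (if b = a then 1 else 0) + (if d = a then 1 else 0)" using assms 1 by auto
      fix z
      have eq: "(lam(a:=z)) b - (lam(a:=z)) d + c = z + (c - lam d)" using assms 1 by auto
      show "sinh (z + (c - lam d)) = sinh ((lam(a:=z)) b - (lam(a:=z)) d + c)"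
        unfolding eq by (rule refl)
    qed
  next
    case 2
    have "lp 1 (\<lambda>z. - 1 * sinh (z + (- c - lam b)))" using lp_scale[OF lp_sinh[of "- c - lam b"], of "-1"] by simp
    then show ?thesis
    proof (rule lp_eq)
      show "(1::nat) = (if b = a then 1 else 0) + (if d = a then 1 else 0)" using assms 2 by auto
      fix z
      have "sinh (lam b - z + c) = sinh (-(z + (- c - lam b)))" by (rule arg_cong[where f=sinh]) simp
      also have "\<dots> = - sinh (z + (- c - lam b))" by (rule sinh_minus)
      finally have "sinh (lam b - z + c) = - sinh (z + (- c - lam b))" .
      then show "- 1 * sinh (z + (- c - lam b)) = sinh ((lam(a:=z)) b - (lam(a:=z)) d + c)"
        using assms 2 by simp
    qed
  next
    case 3
    show ?thesis using lp_const[of "sinh (lam b - lam d + c)"]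
    proof (rule lp_eq)
      show "(0::nat) = (if b = a then 1 else 0) + (if d = a then 1 else 0)" using 3 by auto
      fix z
      show "sinh (lam b - lam d + c) = sinh ((lam(a:=z)) b - (lam(a:=z)) d + c)" using 3 by simp
    qed
  qed
qed

lemma prod_pairs_perm:
  fixes g :: "nat \<Rightarrow> nat \<Rightarrow> complex"
  assumes p: "\<sigma> permutes {1..m}" and sym: "\<And>c d. g c d = g d c"
  shows "(\<Prod>j\<in>{1..m}. \<Prod>k\<in>{1..<j}. g (\<sigma> j) (\<sigma> k)) = (\<Prod>j\<in>{1..m}. \<Prod>k\<in>{1..<j}. g j k)"
proof -
  let ?P = "Sigma {1..m} (\<lambda>j. {1..<j})"
  define h where "h = (\<lambda>(j,k). (max (\<sigma> j) (\<sigma> k), min (\<sigma> j) (\<sigma> k)))"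
  define h' where "h' = (\<lambda>(j,k). (max (inv \<sigma> j) (inv \<sigma> k), min (inv \<sigma> j) (inv \<sigma> k)))"
  have inv1: "inv \<sigma> (\<sigma> x) = x" for x using permutes_inverses(2)[OF p] .
  have inv2: "\<sigma> (inv \<sigma> x) = x" for x using permutes_inverses(1)[OF p] .
  have im1: "\<sigma> x \<in> {1..m} \<longleftrightarrow> x \<in> {1..m}" for x using permutes_in_image[OF p] .
  have im2: "inv \<sigma> x \<in> {1..m} \<longleftrightarrow> x \<in> {1..m}" for x using permutes_in_image[OF permutes_inv[OF p]] .
  have inj1: "\<sigma> x = \<sigma> y \<longleftrightarrow> x = y" for x y by (metis inv1)
  have inj2: "inv \<sigma> x = inv \<sigma> y \<longleftrightarrow> x = y" for x y by (metis inv2)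
  have bij: "bij_betw h ?P ?P"
  proof (rule bij_betw_byWitness[where f'=h'])
    show "\<forall>x\<in>?P. h' (h x) = x"
      by (auto simp: h_def h'_def inv1 max_def min_def)
    show "\<forall>x\<in>?P. h (h' x) = x"
      by (auto simp: h_def h'_def inv2 max_def min_def)
    show "h ` ?P \<subseteq> ?P"
      using im1 inj1 by (fastforce simp: h_def max_def min_def)
    show "h' ` ?P \<subseteq> ?P"
      using im2 inj2 by (fastforce simp: h'_def max_def min_def)
  qed
  have "(\<Prod>j\<in>{1..m}. \<Prod>k\<in>{1..<j}. g j k) = (\<Prod>x\<in>?P. g (fst x) (snd x))"
    by (simp add: prod.Sigma split_def)
  also have "\<dots> = (\<Prod>x\<in>?P. g (fst (h x)) (snd (h x)))"
    using prod.reindex_bij_betw[OF bij, of "\<lambda>x. g (fst x) (snd x)"] by simp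
  also have "\<dots> = (\<Prod>x\<in>?P. g (\<sigma> (fst x)) (\<sigma> (snd x)))"
    by (rule prod.cong) (auto simp: h_def max_def min_def sym)
  also have "\<dots> = (\<Prod>j\<in>{1..m}. \<Prod>k\<in>{1..<j}. g (\<sigma> j) (\<sigma> k))"
    by (simp add: prod.Sigma split_def)
  finally show ?thesis by simp
qed

definition trm :: "real \<Rightarrow> nat \<Rightarrow> (nat \<Rightarrow> complex) \<Rightarrow> (nat \<Rightarrow> complex) \<Rightarrow> (nat \<Rightarrow> nat) \<Rightarrow> nat \<Rightarrow> nat \<Rightarrow> complex" where
  "trm \<zeta> s L xi \<sigma> j k =
     sinh (L (\<sigma> j) - xi k + \<i> * of_real (eps s (\<sigma> j) * \<zeta>)) *
     sinh (L (\<sigma> k) - xi j - \<i> * of_real (eps s (\<sigma> k) * \<zeta>)) *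
     sinh (L (\<sigma> j) - L (\<sigma> k) - \<i> * of_real ((eps s (\<sigma> j) + eps s (\<sigma> k)) * \<zeta>))"

definition Hf :: "real \<Rightarrow> nat \<Rightarrow> nat \<Rightarrow> (nat \<Rightarrow> complex) \<Rightarrow> (nat \<Rightarrow> complex) \<Rightarrow> complex" where
  "Hf \<zeta> s m L xi = (\<Sum>\<sigma> | \<sigma> permutes {1..m}. of_int (sign \<sigma>) *
      (\<Prod>j\<in>{1..m}. \<Prod>k\<in>{1..<j}. trm \<zeta> s L xi \<sigma> j k))"

definition Qf :: "nat \<Rightarrow> (nat \<Rightarrow> complex) \<Rightarrow> complex" where
  "Qf m L = (\<Prod>j\<in>{1..m}. \<Prod>k\<in>{1..<j}. sinh (L j - L k))"

lemma prod2_distrib: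
  "(\<Prod>j\<in>A. \<Prod>k\<in>B j. f j k) * (\<Prod>j\<in>A. \<Prod>k\<in>B j. g j k) = (\<Prod>j\<in>A. \<Prod>k\<in>B j. f j k * (g j k :: complex))"
  by (simp add: prod.distrib)

lemma den_nonzero:
  assumes reg: "regular_point \<zeta> s m L" and p: "\<sigma> permutes {1..m}" and j: "j \<in> {1..m}" and k: "k \<in> {1..<j}"
  shows "sinh (L (\<sigma> j) - L (\<sigma> k) + \<i> * of_real ((eps s (\<sigma> j) + eps s (\<sigma> k)) * \<zeta>)) \<noteq> 0"
proof -
  have sj: "\<sigma> j \<in> {1..m}" and sk: "\<sigma> k \<in> {1..m}" using j k permutes_in_image[OF p] by auto
  have ne: "\<sigma> j \<noteq> \<sigma> k" using k permutes_inj[OF p] by (auto dest: injD)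
  show ?thesis
  proof (cases "\<sigma> k < \<sigma> j")
    case True then show ?thesis using reg sj sk unfolding regular_point_def by auto
  next
    case False
    then have lt: "\<sigma> j < \<sigma> k" using ne by simp
    have "sinh (L (\<sigma> k) - L (\<sigma> j) - \<i> * of_real ((eps s (\<sigma> k) + eps s (\<sigma> j)) * \<zeta>)) \<noteq> 0"
      using reg sj sk lt unfolding regular_point_def by auto
    moreover have "L (\<sigma> j) - L (\<sigma> k) + \<i> * of_real ((eps s (\<sigma> j) + eps s (\<sigma> k)) * \<zeta>)
        = - (L (\<sigma> k) - L (\<sigma> j) - \<i> * of_real ((eps s (\<sigma> k) + eps s (\<sigma> j)) * \<zeta>))"
      by (simp add: algebra_simps)
    ultimately show ?thesis by (metis neg_equal_0_iff_equal sinh_minus)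
  qed
qed

lemma key_identity:
  assumes reg: "regular_point \<zeta> s m L"
  shows "Gt \<zeta> s m L xi * Qf m L = Hf \<zeta> s m L xi"
proof -
  define E where "E c d = \<i> * of_real ((eps s c + eps s d) * \<zeta>)" for c d
  define g where "g c d = sinh (L c - L d + E c d) * sinh (L c - L d - E c d)" for c d
  have Esym: "E c d = E d c" for c d by (simp add: E_def add.commute)
  have gsym: "g c d = g d c" for c d
  proof -
    have e1: "L d - L c + E d c = - (L c - L d - E c d)" using Esym[of c d] by simp
    have e2: "L d - L c - E d c = - (L c - L d + E c d)" using Esym[of c d] by simp
    have "g d c = sinh (- (L c - L d - E c d)) * sinh (- (L c - L d + E c d))"
      unfolding g_def e1 e2 ..
    then show ?thesis unfolding g_def sinh_minus by simp
  qed
  have s0: "sinh (L j - L k) \<noteq> 0" if "j \<in> {1..m}" "k \<in> {1..<j}" for j k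
    using reg that unfolding regular_point_def by auto
  have F: "(fact s * fact (m - s) :: complex) \<noteq> 0" by simp
  have "Gt \<zeta> s m L xi * Qf m L = G \<zeta> s m L xi * (fact s * fact (m - s)) *
      ((\<Prod>j\<in>{1..m}. \<Prod>k\<in>{1..<j}. g j k / sinh (L j - L k)) * (\<Prod>j\<in>{1..m}. \<Prod>k\<in>{1..<j}. sinh (L j - L k)))"
    unfolding Gt_def Qf_def g_def E_def by (simp add: mult.assoc)
  also have "(\<Prod>j\<in>{1..m}. \<Prod>k\<in>{1..<j}. g j k / sinh (L j - L k)) * (\<Prod>j\<in>{1..m}. \<Prod>k\<in>{1..<j}. sinh (L j - L k))
      = (\<Prod>j\<in>{1..m}. \<Prod>k\<in>{1..<j}. g j k)"
    unfolding prod2_distrib by (intro prod.cong refl) (simp add: s0)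
  also have "G \<zeta> s m L xi * (fact s * fact (m - s)) = (\<Sum>\<sigma> | \<sigma> permutes {1..m}. of_int (sign \<sigma>) *
        (\<Prod>j\<in>{1..m}. \<Prod>k\<in>{1..<j}.
           sinh (L (\<sigma> j) - xi k + \<i> * of_real (eps s (\<sigma> j) * \<zeta>)) *
           sinh (L (\<sigma> k) - xi j - \<i> * of_real (eps s (\<sigma> k) * \<zeta>)) /
           sinh (L (\<sigma> j) - L (\<sigma> k) + E (\<sigma> j) (\<sigma> k))))"
    unfolding G_def E_def using F by simp
  also have "\<dots> * (\<Prod>j\<in>{1..m}. \<Prod>k\<in>{1..<j}. g j k) = Hf \<zeta> s m L xi"
    unfolding Hf_def sum_distrib_right
  proof (rule sum.cong[OF refl])
    fix \<sigma> assume "\<sigma> \<in> {\<sigma>. \<sigma> permutes {1..m}}"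
    then have p: "\<sigma> permutes {1..m}" by simp
    have geq: "(\<Prod>j\<in>{1..m}. \<Prod>k\<in>{1..<j}. g j k) = (\<Prod>j\<in>{1..m}. \<Prod>k\<in>{1..<j}. g (\<sigma> j) (\<sigma> k))"
      using prod_pairs_perm[OF p, of g] gsym by simp
    show "of_int (sign \<sigma>) * (\<Prod>j\<in>{1..m}. \<Prod>k\<in>{1..<j}.
           sinh (L (\<sigma> j) - xi k + \<i> * of_real (eps s (\<sigma> j) * \<zeta>)) *
           sinh (L (\<sigma> k) - xi j - \<i> * of_real (eps s (\<sigma> k) * \<zeta>)) /
           sinh (L (\<sigma> j) - L (\<sigma> k) + E (\<sigma> j) (\<sigma> k))) * (\<Prod>j\<in>{1..m}. \<Prod>k\<in>{1..<j}. g j k)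
        = of_int (sign \<sigma>) * (\<Prod>j\<in>{1..m}. \<Prod>k\<in>{1..<j}. trm \<zeta> s L xi \<sigma> j k)"
      unfolding geq mult.assoc prod2_distrib
    proof (intro arg_cong[where f="\<lambda>x. of_int (sign \<sigma>) * x"] prod.cong refl)
      fix j k assume j: "j \<in> {1..m}" and k: "k \<in> {1..<j}"
      have d: "sinh (L (\<sigma> j) - L (\<sigma> k) + E (\<sigma> j) (\<sigma> k)) \<noteq> 0"
        using den_nonzero[OF reg p j k] unfolding E_def .
      show "sinh (L (\<sigma> j) - xi k + \<i> * of_real (eps s (\<sigma> j) * \<zeta>)) *
           sinh (L (\<sigma> k) - xi j - \<i> * of_real (eps s (\<sigma> k) * \<zeta>)) /
           sinh (L (\<sigma> j) - L (\<sigma> k) + E (\<sigma> j) (\<sigma> k)) * g (\<sigma> j) (\<sigma> k) = trm \<zeta> s L xi \<sigma> j k"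
        unfolding trm_def g_def using d by (simp add: E_def)
    qed
  qed
  finally show ?thesis by (simp add: mult.assoc)
qed

lemma count_pairs:
  fixes \<sigma> :: "nat \<Rightarrow> nat"
  assumes p: "\<sigma> permutes {1..m}" and a: "a \<in> {1..m}"
  shows "(\<Sum>j\<in>{1..m}. \<Sum>k\<in>{1..<j}. ((if \<sigma> j = a then 1 else 0) + (if \<sigma> k = a then 1 else 0)
           + ((if \<sigma> j = a then 1 else 0) + (if \<sigma> k = a then 1 else 0)))) = (2 * (m - 1) :: nat)"
proof -
  define q where "q = inv \<sigma> a"
  have iff: "\<sigma> x = a \<longleftrightarrow> x = q" for x
    unfolding q_def using permutes_inverses[OF p] by metis
  have q: "q \<in> {1..m}" unfolding q_def using permutes_in_image[OF permutes_inv[OF p]] a by simp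
  have 1: "(\<Sum>j\<in>{1..m}. \<Sum>k\<in>{1..<j}. (if j = q then 1 else 0)) = q - (1::nat)"
  proof -
    have "(\<Sum>j\<in>{1..m}. \<Sum>k\<in>{1..<j}. (if j = q then 1 else 0)) = (\<Sum>j\<in>{1..m}. (if j = q then q - 1 else (0::nat)))"
      by (rule sum.cong) auto
    also have "\<dots> = q - 1" using q by (simp add: sum.delta)
    finally show ?thesis .
  qed
  have 2: "(\<Sum>j\<in>{1..m}. \<Sum>k\<in>{1..<j}. (if k = q then 1 else 0)) = m - (q::nat)"
  proof -
    have "(\<Sum>j\<in>{1..m}. \<Sum>k\<in>{1..<j}. (if k = q then 1 else 0)) = (\<Sum>j\<in>{1..m}. (if q < j then 1 else (0::nat)))"
      by (rule sum.cong) (use q in auto)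
    also have "\<dots> = card ({1..m} \<inter> {j. q < j})" by (simp add: sum.If_cases)
    also have "{1..m} \<inter> {j. q < j} = {q<..m}" using q by auto
    finally show ?thesis by simp
  qed
  have "(\<Sum>j\<in>{1..m}. \<Sum>k\<in>{1..<j}. ((if \<sigma> j = a then 1 else 0) + (if \<sigma> k = a then 1 else 0)
           + ((if \<sigma> j = a then 1 else 0) + (if \<sigma> k = a then 1 else 0))))
     = (2::nat) * ((\<Sum>j\<in>{1..m}. \<Sum>k\<in>{1..<j}. (if j = q then 1 else 0)) + (\<Sum>j\<in>{1..m}. \<Sum>k\<in>{1..<j}. (if k = q then 1 else 0)))"
    by (simp add: iff sum.distrib sum_distrib_left mult_2)
  also have "\<dots> = 2 * (m - 1)" unfolding 1 2 using q by simp
  finally show ?thesis .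
qed

lemma lp_v1: "lp (if b = a then 1 else 0) (\<lambda>z. sinh ((lam(a:=z)) b - x + y))"
  using lp_var[of b a lam "y - x"]
proof (rule lp_eq)
  fix z
  have "(lam(a:=z)) b + (y - x) = (lam(a:=z)) b - x + y" by simp
  then show "sinh ((lam(a:=z)) b + (y - x)) = sinh ((lam(a:=z)) b - x + y)" by (rule arg_cong)
qed simp

lemma lp_v2: "lp (if b = a then 1 else 0) (\<lambda>z. sinh ((lam(a:=z)) b - x - y))"
  using lp_var[of b a lam "- x - y"]
proof (rule lp_eq)
  fix z
  have "(lam(a:=z)) b + (- x - y) = (lam(a:=z)) b - x - y" by simp
  then show "sinh ((lam(a:=z)) b + (- x - y)) = sinh ((lam(a:=z)) b - x - y)" by (rule arg_cong)
qed simp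

lemma lp_v3: "b \<noteq> d \<Longrightarrow> lp ((if b = a then 1 else 0) + (if d = a then 1 else 0)) (\<lambda>z. sinh ((lam(a:=z)) b - (lam(a:=z)) d - y))"
  using lp_var2[of b d a lam "- y"] by simp

lemma lp_H:
  assumes a: "a \<in> {1..m}"
  shows "lp (2 * (m - 1)) (\<lambda>z. Hf \<zeta> s m (lam(a:=z)) xi)"
  unfolding Hf_def
proof (rule lp_sum)
  show "finite {\<sigma>. \<sigma> permutes {1..m}}" by (simp add: finite_permutations)
  fix \<sigma> assume "\<sigma> \<in> {\<sigma>. \<sigma> permutes {1..m}}"
  then have p: "\<sigma> permutes {1..m}" by simp
  have "lp (\<Sum>j\<in>{1..m}. \<Sum>k\<in>{1..<j}. ((if \<sigma> j = a then 1 else 0) + (if \<sigma> k = a then 1 else 0)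
           + ((if \<sigma> j = a then 1 else 0) + (if \<sigma> k = a then 1 else 0))))
        (\<lambda>z. \<Prod>j\<in>{1..m}. \<Prod>k\<in>{1..<j}. trm \<zeta> s (lam(a:=z)) xi \<sigma> j k)"
  proof (rule lp_prod[where f="\<lambda>j z. \<Prod>k\<in>{1..<j}. trm \<zeta> s (lam(a:=z)) xi \<sigma> j k", OF finite_atLeastAtMost])
    fix j assume j: "j \<in> {1..m}"
    show "lp (\<Sum>k\<in>{1..<j}. ((if \<sigma> j = a then 1 else 0) + (if \<sigma> k = a then 1 else 0)
           + ((if \<sigma> j = a then 1 else 0) + (if \<sigma> k = a then 1 else 0))))
        (\<lambda>z. \<Prod>k\<in>{1..<j}. trm \<zeta> s (lam(a:=z)) xi \<sigma> j k)"
    proof (rule lp_prod[where f="\<lambda>k z. trm \<zeta> s (lam(a:=z)) xi \<sigma> j k", OF finite_atLeastLessThan])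
      fix k assume k: "k \<in> {1..<j}"
      have ne: "\<sigma> j \<noteq> \<sigma> k" using k permutes_inj[OF p] by (auto dest: injD)
      show "lp ((if \<sigma> j = a then 1 else 0) + (if \<sigma> k = a then 1 else 0)
           + ((if \<sigma> j = a then 1 else 0) + (if \<sigma> k = a then 1 else 0)))
           (\<lambda>z. trm \<zeta> s (lam(a:=z)) xi \<sigma> j k)"
        unfolding trm_def by (intro lp_mult lp_v1 lp_v2 lp_v3 ne)
    qed
  qed
  then have "lp (2 * (m - 1)) (\<lambda>z. \<Prod>j\<in>{1..m}. \<Prod>k\<in>{1..<j}. trm \<zeta> s (lam(a:=z)) xi \<sigma> j k)"
    unfolding count_pairs[OF p a] .
  then show "lp (2 * (m - 1)) (\<lambda>z. of_int (sign \<sigma>) * (\<Prod>j\<in>{1..m}. \<Prod>k\<in>{1..<j}. trm \<zeta> s (lam(a:=z)) xi \<sigma> j k))"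
    by (rule lp_scale)
qed

lemma H_vanish:
  assumes a: "a \<in> {1..m}" and b: "b \<in> {1..m}" and ab: "b \<noteq> a"
  shows "Hf \<zeta> s m (lam(a:=lam b)) xi = 0"
proof -
  define L where "L = lam(a:=lam b)"
  define T where "T \<sigma> = (\<Prod>j\<in>{1..m}. \<Prod>k\<in>{1..<j}. trm \<zeta> s L xi \<sigma> j k)" for \<sigma>
  have HT: "Hf \<zeta> s m L xi = (\<Sum>\<sigma> | \<sigma> permutes {1..m}. of_int (sign \<sigma>) * T \<sigma>)"
    unfolding Hf_def T_def ..
  show ?thesis
  proof (cases "eps s a = eps s b")
    case True
    define \<tau> where "\<tau> = Transposition.transpose a b"
    have tp: "\<tau> permutes {1..m}" unfolding \<tau>_def using a b by (rule permutes_swap_id)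
    have Lt: "L (\<tau> x) = L x" for x unfolding \<tau>_def L_def
      by (cases "x = a"; cases "x = b") auto
    have et: "eps s (\<tau> x) = eps s x" for x unfolding \<tau>_def using True
      by (cases "x = a"; cases "x = b") auto
    have Tt: "T (\<tau> \<circ> \<sigma>) = T \<sigma>" for \<sigma>
      unfolding T_def trm_def by (simp add: Lt et)
    have sg: "sign (\<tau> \<circ> \<sigma>) = - sign \<sigma>" if "\<sigma> permutes {1..m}" for \<sigma>
    proof -
      have "permutation \<tau>" "permutation \<sigma>" using tp that permutation_permutes by blast+
      then have "sign (\<tau> \<circ> \<sigma>) = sign \<tau> * sign \<sigma>" by (rule sign_compose)
      moreover have "sign \<tau> = (-1::int)" unfolding \<tau>_def using ab sign_swap_id[of a b] by auto
      ultimately show ?thesis by simp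
    qed
    have "Hf \<zeta> s m L xi = (\<Sum>\<sigma> | \<sigma> permutes {1..m}. of_int (sign (\<tau> \<circ> \<sigma>)) * T (\<tau> \<circ> \<sigma>))"
      unfolding HT by (rule setum_permutations_compose_left[OF tp])
    also have "\<dots> = (\<Sum>\<sigma> | \<sigma> permutes {1..m}. - (of_int (sign \<sigma>) * T \<sigma>))"
      by (rule sum.cong) (auto simp: sg Tt)
    also have "\<dots> = - Hf \<zeta> s m L xi" unfolding HT sum_negf ..
    finally show ?thesis unfolding L_def by simp
  next
    case False
    have e0: "eps s a + eps s b = 0" using False unfolding eps_def by (auto split: if_splits)
    have "T \<sigma> = 0" if p: "\<sigma> permutes {1..m}" for \<sigma>
    proof -
      define pa where "pa = inv \<sigma> a"
      define pb where "pb = inv \<sigma> b"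
      have spa: "\<sigma> pa = a" and spb: "\<sigma> pb = b" unfolding pa_def pb_def using permutes_inverses(1)[OF p] by auto
      have pa: "pa \<in> {1..m}" and pb: "pb \<in> {1..m}"
        unfolding pa_def pb_def using permutes_in_image[OF permutes_inv[OF p]] a b by auto
      have ne: "pa \<noteq> pb" using spa spb ab by auto
      define j0 where "j0 = max pa pb"
      define k0 where "k0 = min pa pb"
      have j0: "j0 \<in> {1..m}" and k0: "k0 \<in> {1..<j0}" using pa pb ne unfolding j0_def k0_def by auto
      have "L (\<sigma> j0) = lam b" "L (\<sigma> k0) = lam b" "eps s (\<sigma> j0) + eps s (\<sigma> k0) = 0"
        unfolding j0_def k0_def L_def using spa spb e0 by (auto simp: max_def min_def add.commute)
      then have "trm \<zeta> s L xi \<sigma> j0 k0 = 0" unfolding trm_def by simp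
      then have "(\<Prod>k\<in>{1..<j0}. trm \<zeta> s L xi \<sigma> j0 k) = 0" using k0 by (intro prod_zero) auto
      then show ?thesis unfolding T_def using j0 by (intro prod_zero) auto
    qed
    then show ?thesis unfolding L_def[symmetric] HT by simp
  qed
qed

lemma sinh_exp: fixes z c :: complex shows "sinh (z - c) * exp z = exp (-c) / 2 * (exp (2*z) - exp (2*c))"
proof -
  have e1: "exp (z - c) * exp z = exp (-c) * exp (2*z)"
    unfolding mult_exp_exp by (rule arg_cong[where f=exp]) simp
  have e2: "exp (-(z - c)) * exp z = exp (-c) * exp (2*c)"
    unfolding mult_exp_exp by (rule arg_cong[where f=exp]) simp
  have "sinh (z - c) * exp z = (exp (z - c) * exp z - exp (-(z - c)) * exp z) / 2"
    unfolding sinh_field_def by (simp add: left_diff_distrib)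
  also have "\<dots> = (exp (-c) * exp (2*z) - exp (-c) * exp (2*c)) / 2" unfolding e1 e2 ..
  also have "\<dots> = exp (-c) / 2 * (exp (2*z) - exp (2*c))" by (simp add: field_simps)
  finally show ?thesis .
qed

lemma Q_form:
  assumes a: "a \<in> {1..m}"
  shows "\<exists>K. \<forall>z. Qf m (lam(a:=z)) * exp (of_nat (m-1) * z) = K * (\<Prod>b\<in>{1..m}-{a}. (exp (2*z) - exp (2 * lam b)))"
proof -
  define PS where "PS = Sigma {1..m} (\<lambda>j. {1..<j})"
  define h where "h b = (max a b, min a b)" for b :: nat
  define PA where "PA = h ` ({1..m}-{a})"
  define cb where "cb b = (if b < a then exp (- lam b) / 2 else - exp (- lam b) / 2)" for b
  define K0 where "K0 = (\<Prod>x\<in>PS - PA. sinh (lam (fst x) - lam (snd x)))"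
  have fin: "finite PS" unfolding PS_def by simp
  have sub: "PA \<subseteq> PS" unfolding PA_def PS_def h_def using a by (auto simp: max_def min_def)
  have inj: "inj_on h ({1..m}-{a})" unfolding h_def inj_on_def by (auto simp: max_def min_def split: if_splits)
  have out: "fst x \<noteq> a \<and> snd x \<noteq> a" if "x \<in> PS - PA" for x
  proof -
    define j k where "j = fst x" "k = snd x"
    have x: "x = (j,k)" "j \<in> {1..m}" "k \<in> {1..<j}" using that unfolding PS_def j_k_def by (auto simp: mem_Sigma_iff)
    have "j \<noteq> a"
    proof
      assume "j = a" then have "x = h k" "k \<in> {1..m}-{a}" using x a unfolding h_def by auto
      then show False using that unfolding PA_def by auto
    qed
    moreover have "k \<noteq> a"
    proof
      assume "k = a" then have "x = h j" "j \<in> {1..m}-{a}" using x a unfolding h_def by auto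
      then show False using that unfolding PA_def by auto
    qed
    ultimately show ?thesis using x by simp
  qed
  have card: "card ({1..m}-{a}) = m - 1" using a by simp
  show ?thesis
  proof (intro exI allI)
    fix z
    let ?L = "lam(a:=z)"
    have fb: "sinh (?L (fst (h b)) - ?L (snd (h b))) * exp z = cb b * (exp (2*z) - exp (2 * lam b))"
      if b: "b \<in> {1..m}-{a}" for b
    proof (cases "b < a")
      case True
      then have "sinh (?L (fst (h b)) - ?L (snd (h b))) = sinh (z - lam b)" unfolding h_def by simp
      then show ?thesis using True sinh_exp[of z "lam b"] unfolding cb_def by simp
    next
      case False
      then have ba: "a < b" using b by auto
      have "sinh (?L (fst (h b)) - ?L (snd (h b))) = sinh (- (z - lam b))" unfolding h_def using ba by simp
      then have "sinh (?L (fst (h b)) - ?L (snd (h b))) = - sinh (z - lam b)" by (simp only: sinh_minus)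
      then show ?thesis using False sinh_exp[of z "lam b"] unfolding cb_def by simp
    qed
    have "Qf m ?L = (\<Prod>x\<in>PS. sinh (?L (fst x) - ?L (snd x)))"
      unfolding Qf_def PS_def by (simp add: prod.Sigma split_def)
    also have "\<dots> = (\<Prod>x\<in>PS - PA. sinh (?L (fst x) - ?L (snd x))) * (\<Prod>x\<in>PA. sinh (?L (fst x) - ?L (snd x)))"
      by (rule prod.subset_diff[OF sub fin])
    also have "(\<Prod>x\<in>PS - PA. sinh (?L (fst x) - ?L (snd x))) = K0"
      unfolding K0_def by (rule prod.cong) (use out in auto)
    also have "(\<Prod>x\<in>PA. sinh (?L (fst x) - ?L (snd x))) = (\<Prod>b\<in>{1..m}-{a}. sinh (?L (fst (h b)) - ?L (snd (h b))))"
      unfolding PA_def by (rule prod.reindex[OF inj, unfolded comp_def])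
    finally have Qeq: "Qf m ?L = K0 * (\<Prod>b\<in>{1..m}-{a}. sinh (?L (fst (h b)) - ?L (snd (h b))))" .
    have "Qf m ?L * exp (of_nat (m-1) * z) = K0 * ((\<Prod>b\<in>{1..m}-{a}. sinh (?L (fst (h b)) - ?L (snd (h b)))) * exp z ^ card ({1..m}-{a}))"
      by (simp only: Qeq card exp_of_nat_mult mult.assoc)
    also have "(\<Prod>b\<in>{1..m}-{a}. sinh (?L (fst (h b)) - ?L (snd (h b)))) * exp z ^ card ({1..m}-{a})
        = (\<Prod>b\<in>{1..m}-{a}. sinh (?L (fst (h b)) - ?L (snd (h b))) * exp z)"
      by (simp add: prod.distrib)
    also have "\<dots> = (\<Prod>b\<in>{1..m}-{a}. cb b * (exp (2*z) - exp (2 * lam b)))"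
      by (rule prod.cong[OF refl], erule fb)
    also have "\<dots> = (\<Prod>b\<in>{1..m}-{a}. cb b) * (\<Prod>b\<in>{1..m}-{a}. (exp (2*z) - exp (2 * lam b)))"
      by (simp add: prod.distrib)
    finally show "Qf m ?L * exp (of_nat (m-1) * z) = K0 * (\<Prod>b\<in>{1..m}-{a}. cb b) * (\<Prod>b\<in>{1..m}-{a}. (exp (2*z) - exp (2 * lam b)))"
      by (simp only: mult.assoc)
  qed
qed

lemma poly_roots_dvd:
  fixes P :: "complex poly"
  assumes "finite B" "inj_on r B" "\<forall>b\<in>B. poly P (r b) = 0"
  shows "\<exists>R. P = (\<Prod>b\<in>B. [:- r b, 1:]) * R \<and> (P \<noteq> 0 \<longrightarrow> degree R + card B = degree P)"
  using assms
proof (induction B arbitrary: P rule: finite_induct)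
  case empty then show ?case by simp
next
  case (insert x F)
  have "[:- r x, 1:] dvd P" using insert.prems poly_eq_0_iff_dvd by auto
  then obtain P1 where P1: "P = [:- r x, 1:] * P1" by (elim dvdE)
  have "\<forall>b\<in>F. poly P1 (r b) = 0"
  proof
    fix b assume b: "b \<in> F"
    have "r b \<noteq> r x" using insert.prems(1) insert.hyps(2) b by (auto simp: inj_on_def)
    moreover have "poly P (r b) = 0" using insert.prems(2) b by auto
    ultimately show "poly P1 (r b) = 0" unfolding P1 by simp
  qed
  moreover have "inj_on r F" using insert.prems(1) by (auto simp: inj_on_def)
  ultimately obtain R where R: "P1 = (\<Prod>b\<in>F. [:- r b, 1:]) * R" "P1 \<noteq> 0 \<longrightarrow> degree R + card F = degree P1"
    using insert.IH by blast
  show ?case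
  proof (intro exI conjI impI)
    show "P = (\<Prod>b\<in>insert x F. [:- r b, 1:]) * R"
      by (simp only: P1 R(1) prod.insert[OF insert.hyps] mult.assoc)
    assume "P \<noteq> 0"
    then have "P1 \<noteq> 0" using P1 by auto
    then have "degree P = 1 + degree P1" unfolding P1 by (subst degree_mult_eq) auto
    then show "degree R + card (insert x F) = degree P" using R(2) \<open>P1 \<noteq> 0\<close> insert.hyps by simp
  qed
qed

lemma poly_as_sum:
  fixes R :: "complex poly"
  assumes "degree R < m"
  shows "poly R x = (\<Sum>k<m. coeff R k * x ^ k)"
proof -
  have "poly R x = (\<Sum>k\<le>degree R. coeff R k * x ^ k)" by (rule poly_altdef)
  also have "\<dots> = (\<Sum>k<m. coeff R k * x ^ k)"
    by (rule sum.mono_neutral_left) (use assms in \<open>auto simp: coeff_eq_0\<close>)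
  finally show ?thesis .
qed

lemma exp2_eq_sinh: fixes x y :: complex
  assumes "exp (2*x) = exp (2*y)" shows "sinh (x - y) = 0"
proof -
  have "sinh (x - y) * exp x = 0" using sinh_exp[of x y] assms by simp
  then show ?thesis by simp
qed

lemma Qf_nonzero: "regular_point \<zeta> s m L \<Longrightarrow> Qf m L \<noteq> 0"
  unfolding Qf_def regular_point_def by (auto simp: prod_zero_iff)

theorem lemma3p2:
  fixes \<zeta> :: real and m s j :: nat and lam xi :: "nat \<Rightarrow> complex"
  assumes "0 < \<zeta>" and "\<zeta> < pi" and "1 \<le> m" and "s \<le> m" and "j \<in> {1..m}"
  shows "\<exists>c :: nat \<Rightarrow> complex. \<forall>z :: complex.
           regular_point \<zeta> s m (lam(j := z)) \<longrightarrow>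
           exp (of_nat (m - 1) * z) * Gt \<zeta> s m (lam(j := z)) xi
             = (\<Sum>k<m. c k * exp (2 * z) ^ k)"
proof (cases "\<exists>z0. regular_point \<zeta> s m (lam(j := z0))")
  case False
  then show ?thesis by (intro exI[of _ "\<lambda>_. 0"]) auto
next
  case True
  then obtain z0 where r0: "regular_point \<zeta> s m (lam(j := z0))" by blast
  have jm: "j \<in> {1..m}" by fact
  define B where "B = {1..m} - {j}"
  define w where "w b = exp (2 * lam b)" for b
  have finB: "finite B" unfolding B_def by simp
  have cardB: "card B = m - 1" unfolding B_def using jm by simp
  obtain P where P: "degree P \<le> 2*(m-1)"
    "\<forall>z. Hf \<zeta> s m (lam(j:=z)) xi * exp (of_nat (2*(m-1)) * z) = poly P (exp (2*z))"
    using lp_H[OF jm, of \<zeta> s lam xi] unfolding lp_def by blast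
  have roots: "\<forall>b\<in>B. poly P (w b) = 0"
  proof
    fix b assume b: "b \<in> B"
    have "Hf \<zeta> s m (lam(j:=lam b)) xi = 0" using H_vanish[OF jm] b unfolding B_def by auto
    then show "poly P (w b) = 0" using P(2)[rule_format, of "lam b"] unfolding w_def by simp
  qed
  have inj: "inj_on w B"
  proof (rule inj_onI, rule ccontr)
    fix b d assume b: "b \<in> B" and d: "d \<in> B" and eq: "w b = w d" and ne: "b \<noteq> d"
    have s1: "sinh (lam b - lam d) = 0" "sinh (lam d - lam b) = 0"
      using eq exp2_eq_sinh unfolding w_def by metis+
    show False
    proof (cases "d < b")
      case True
      then have "1 \<le> d \<and> d < b \<and> b \<le> m" using b d unfolding B_def by auto
      from r0[unfolded regular_point_def, rule_format, OF this]
      have "sinh ((lam(j := z0)) b - (lam(j := z0)) d) \<noteq> 0" by (rule conjunct1)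
      then show False using s1 b d unfolding B_def by auto
    next
      case False
      then have "b < d" using ne by simp
      then have "1 \<le> b \<and> b < d \<and> d \<le> m" using b d unfolding B_def by auto
      from r0[unfolded regular_point_def, rule_format, OF this]
      have "sinh ((lam(j := z0)) d - (lam(j := z0)) b) \<noteq> 0" by (rule conjunct1)
      then show False using s1 b d unfolding B_def by auto
    qed
  qed
  obtain R where R: "P = (\<Prod>b\<in>B. [:- w b, 1:]) * R" "P \<noteq> 0 \<longrightarrow> degree R + card B = degree P"
    using poly_roots_dvd[OF finB inj roots] by blast
  have Pi0: "(\<Prod>b\<in>B. [:- w b, 1:]) \<noteq> 0" using finB by (simp add: prod_zero_iff)
  have degR: "degree R < m"
  proof (cases "P = 0")
    case True
    then have "R = 0" using R(1) Pi0 by simp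
    then show ?thesis using assms(3) by simp
  next
    case False
    then show ?thesis using R(2) P(1) cardB assms(3) by linarith
  qed
  obtain K where K: "\<forall>z. Qf m (lam(j:=z)) * exp (of_nat (m-1) * z) = K * (\<Prod>b\<in>B. (exp (2*z) - exp (2 * lam b)))"
    using Q_form[OF jm, of lam] unfolding B_def by blast
  have K0: "K \<noteq> 0"
  proof
    assume "K = 0"
    then have "Qf m (lam(j:=z0)) * exp (of_nat (m-1) * z0) = 0" using K by simp
    then show False using Qf_nonzero[OF r0] by simp
  qed
  define c where "c k = coeff R k / K" for k
  show ?thesis
  proof (intro exI[of _ c] allI impI)
    fix z assume r: "regular_point \<zeta> s m (lam(j := z))"
    define E1 where "E1 = exp (of_nat (m - 1) * z)"
    define D where "D = (\<Prod>b\<in>B. (exp (2*z) - exp (2 * lam b)))"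
    define Gz where "Gz = Gt \<zeta> s m (lam(j := z)) xi"
    define Qz where "Qz = Qf m (lam(j := z))"
    define Hz where "Hz = Hf \<zeta> s m (lam(j := z)) xi"
    have HQ: "Gz * Qz = Hz" unfolding Gz_def Qz_def Hz_def by (rule key_identity[OF r])
    have QK: "Qz * E1 = K * D" unfolding Qz_def E1_def D_def using K by simp
    have Qnz: "Qz \<noteq> 0" unfolding Qz_def by (rule Qf_nonzero[OF r])
    have E1nz: "E1 \<noteq> 0" unfolding E1_def by simp
    have Dnz: "D \<noteq> 0" using QK Qnz E1nz by auto
    have PD: "poly P (exp (2*z)) = D * poly R (exp (2*z))"
      unfolding R(1) D_def w_def by (simp add: poly_prod)
    have E2: "exp (of_nat (2*(m-1)) * z) = E1 * E1" unfolding E1_def mult_exp_exp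
      by (rule arg_cong[where f=exp]) (simp only: mult_2 of_nat_add distrib_right)
    have HP: "Hz * (E1 * E1) = D * poly R (exp (2*z))" using P(2) PD E2 unfolding Hz_def by metis
    have "(E1 * Gz * K) * D = (E1 * Gz) * (K * D)" by (simp add: ac_simps)
    also have "\<dots> = (Gz * Qz) * (E1 * E1)" unfolding QK[symmetric] by (simp add: ac_simps)
    also have "\<dots> = poly R (exp (2*z)) * D" unfolding HQ HP by simp
    finally have "E1 * Gz * K = poly R (exp (2*z))" using Dnz by simp
    then have "E1 * Gz = poly R (exp (2*z)) / K" using K0 by (simp add: field_simps)
    also have "\<dots> = (\<Sum>k<m. c k * exp (2 * z) ^ k)"
      unfolding poly_as_sum[OF degR] c_def by (simp add: sum_divide_distrib field_simps)
    finally show "exp (of_nat (m - 1) * z) * Gt \<zeta> s m (lam(j := z)) xi = (\<Sum>k<m. c k * exp (2 * z) ^ k)"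
      unfolding E1_def Gz_def .
  qed
qed

end
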